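(* Let $n>2k-t$, $k>t$, and let $\mathcal{S}_p$ be a maximal set of $k$-spaces in $\mathrm{PG}(n,q)$ pairwise intersecting in at least a $t$-space. Let $\psi(\mathcal{S}_p)=\min\{\dim T: T\text{ a subspace},\ \dim(T\cap\alpha)\geq t\ \forall\alpha\in\mathcal{S}_p\}$ and let $\mathcal{T}$ be the set of all $\psi(\mathcal{S}_p)$-dimensional subspaces meeting every element of $\mathcal{S}_p$ in at least a $t$-space. If $\psi(\mathcal{S}_p)=t+1$ and $|\mathcal{T}|\leq 2$, then \[|\mathcal{S}_p|\leq 2\left[{n-t-1\atop k-t-1}\right]_q+(\theta_{t+1}\theta_{k-t}-\theta_{t+1}-1)\theta_{k-t}\left[{n-t-2\atop k-t-2}\right]_q.\]
   Context: Dimensions are projective; $\left[{n\atop k}\right]_q=\frac{(q^n-1)\cdots(q^{n-k+1}-1)}{(q^k-1)\cdots(q-1)}$ for $k>0$, $=1$ for $k=0$; $\theta_m=\frac{q^{m+1}-1}{q-1}$. Maximal means no further $k$-space can be added keeping the property. *)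

theory Defs
  imports "HOL-Analysis.Analysis"
begin

text \<open>PG(n,q) is modelled as the lattice of subspaces of the vector space 'a^'n over
  the finite field 'a (q = CARD('a)), where CARD('n) = n+1. A projective k-space is a
  vector subspace of (vector) dimension k+1.\<close>

definition proj_space :: "nat \<Rightarrow> ('a::field ^ 'n) set \<Rightarrow> bool" where
  "proj_space k V \<longleftrightarrow> vec.subspace V \<and> vec.dim V = k + 1"

definition meets_in :: "nat \<Rightarrow> ('a::field ^ 'n) set \<Rightarrow> ('a ^ 'n) set \<Rightarrow> bool" where
  "meets_in t A B \<longleftrightarrow> vec.dim (A \<inter> B) \<ge> t + 1"

definition t_intersecting :: "nat \<Rightarrow> nat \<Rightarrow> ('a::field ^ 'n) set set \<Rightarrow> bool" where
  "t_intersecting k t S \<longleftrightarrow> (\<forall>A\<in>S. proj_space k A) \<and> (\<forall>A\<in>S. \<forall>B\<in>S. meets_in t A B)"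

definition maximal_t_intersecting :: "nat \<Rightarrow> nat \<Rightarrow> ('a::field ^ 'n) set set \<Rightarrow> bool" where
  "maximal_t_intersecting k t S \<longleftrightarrow> t_intersecting k t S \<and>
     (\<forall>B. proj_space k B \<and> B \<notin> S \<longrightarrow> \<not> t_intersecting k t (insert B S))"

definition psi :: "nat \<Rightarrow> ('a::field ^ 'n) set set \<Rightarrow> nat" where
  "psi t S = (LEAST d. \<exists>T. proj_space d T \<and> (\<forall>A\<in>S. meets_in t T A))"

definition Tset :: "nat \<Rightarrow> ('a::field ^ 'n) set set \<Rightarrow> ('a ^ 'n) set set" where
  "Tset t S = {T. proj_space (psi t S) T \<and> (\<forall>A\<in>S. meets_in t T A)}"

text \<open>Gaussian binomial with integer arguments; 0 for negative lower index.\<close>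
definition qbinom :: "real \<Rightarrow> int \<Rightarrow> int \<Rightarrow> real" where
  "qbinom q n k = (if k < 0 then 0 else
     (\<Prod>i\<in>{0..<nat k}. (q ^ nat (n - int i) - 1) / (q ^ (i + 1) - 1)))"

definition theta :: "real \<Rightarrow> nat \<Rightarrow> real" where
  "theta q m = (q ^ (m + 1) - 1) / (q - 1)"

end

theory Submission
  imports Defs
begin

lemma card_span_indep:
  fixes B :: "('a::{field,finite}^'n) set"
  assumes "vec.independent B"
  shows "card (vec.span B) = CARD('a) ^ card B"
proof -
  have "finite B" by simp
  then show ?thesis using assms
  proof (induction B rule: finite_induct)
    case empty
    then show ?case by (simp add: vec.span_empty)
  next
    case (insert v B)
    have indB: "vec.independent B" using insert.prems vec.independent_mono by blast
    have nv: "v \<notin> vec.span B" using insert.prems insert.hyps vec.independent_insert[of v B] by simp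
    have eq: "vec.span (insert v B) = (\<lambda>(c,y). c *s v + y) ` (UNIV \<times> vec.span B)"
    proof
      show "vec.span (insert v B) \<subseteq> (\<lambda>(c,y). c *s v + y) ` (UNIV \<times> vec.span B)"
      proof
        fix x assume "x \<in> vec.span (insert v B)"
        then obtain k where "x - k *s v \<in> vec.span B" unfolding vec.span_insert by blast
        then show "x \<in> (\<lambda>(c,y). c *s v + y) ` (UNIV \<times> vec.span B)"
          by (intro image_eqI[of _ _ "(k, x - k *s v)"]) auto
      qed
    next
      show "(\<lambda>(c,y). c *s v + y) ` (UNIV \<times> vec.span B) \<subseteq> vec.span (insert v B)"
        by (auto intro!: vec.span_add vec.span_scale simp: vec.span_base vec.span_mono[of B "insert v B", THEN subsetD, OF subset_insertI])
    qed
    have inj: "inj_on (\<lambda>(c,y). c *s v + y) (UNIV \<times> vec.span B)"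
    proof (rule inj_onI, clarsimp)
      fix c y c' y'
      assume y: "y \<in> vec.span B" "y' \<in> vec.span B" and e: "c *s v + y = c' *s v + y'"
      have "(c - c') *s v = y' - y" using e by (simp add: algebra_simps vector_sub_rdistrib)
      hence "(c - c') *s v \<in> vec.span B" using y vec.span_diff by metis
      show "c = c' \<and> y = y'"
      proof (cases "c = c'")
        case True then show ?thesis using e by simp
      next
        case False
        have "inverse (c - c') *s ((c - c') *s v) = (inverse (c - c') * (c - c')) *s v"
          by (rule vector_smult_assoc)
        hence "v = inverse (c - c') *s ((c - c') *s v)" using False by simp
        hence "v \<in> vec.span B" using \<open>(c - c') *s v \<in> vec.span B\<close> vec.span_scale by metis
        then show ?thesis using nv by blast
      qed
    qed
    have "card (vec.span (insert v B)) = card (UNIV :: 'a set) * card (vec.span B)"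
      unfolding eq card_image[OF inj] card_cartesian_product by simp
    then show ?case using insert.IH[OF indB] insert.hyps by simp
  qed
qed

lemma card_subspace:
  fixes U :: "('a::{field,finite}^'n) set"
  assumes "vec.subspace U"
  shows "card U = CARD('a) ^ vec.dim U"
proof -
  obtain B where B: "B \<subseteq> U" "vec.independent B" "U \<subseteq> vec.span B" "card B = vec.dim U"
    using vec.basis_exists by blast
  have "vec.span B = U"
    using B assms vec.span_minimal by (metis subset_antisym)
  then show ?thesis using card_span_indep[OF B(2)] B(4) by simp
qed

fun seqs :: "('a::{field,finite}^'n) set \<Rightarrow> ('a^'n) set \<Rightarrow> nat \<Rightarrow> ('a^'n) list set" where
  "seqs W X 0 = {[]}"
| "seqs W X (Suc r) = (\<Union>vs\<in>seqs W X r. (\<lambda>v. v # vs) ` (X - vec.span (W \<union> set vs)))"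

lemma seqs_props:
  "vs \<in> seqs W X r \<Longrightarrow> length vs = r \<and> set vs \<subseteq> X \<and> vec.dim (W \<union> set vs) = vec.dim W + r"
proof (induction r arbitrary: vs)
  case 0 then show ?case by simp
next
  case (Suc r)
  then obtain ws v where vs: "vs = v # ws" "ws \<in> seqs W X r" "v \<in> X" "v \<notin> vec.span (W \<union> set ws)"
    by auto
  have "W \<union> set vs = insert v (W \<union> set ws)" using vs by auto
  then have "vec.dim (W \<union> set vs) = vec.dim (W \<union> set ws) + 1"
    using vs(4) by (simp add: vec.dim_insert)
  then show ?case using Suc.IH[OF vs(2)] vs by auto
qed

lemma seqs_finite: "finite (seqs W X r)"
  by (induction r) auto

lemma seqs_restrict:
  "vs \<in> seqs W X r \<Longrightarrow> set vs \<subseteq> Y \<Longrightarrow> vs \<in> seqs W Y r"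
proof (induction r arbitrary: vs)
  case 0 then show ?case by simp
next
  case (Suc r)
  then obtain ws v where vs: "vs = v # ws" "ws \<in> seqs W X r" "v \<in> X" "v \<notin> vec.span (W \<union> set ws)"
    by auto
  have "ws \<in> seqs W Y r" using Suc.IH[OF vs(2)] Suc.prems vs by auto
  then show ?case using vs Suc.prems by auto
qed

lemma seqs_mono: "Y \<subseteq> X \<Longrightarrow> seqs W Y r \<subseteq> seqs W X r"
proof (induction r)
  case 0 then show ?case by simp
next
  case (Suc r) then show ?case by auto
qed

lemma card_seqs:
  fixes W X :: "('a::{field,finite}^'n) set"
  assumes "vec.subspace W" "vec.subspace X" "W \<subseteq> X"
  shows "card (seqs W X r) = (\<Prod>i<r. CARD('a) ^ vec.dim X - CARD('a) ^ (vec.dim W + i))"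
proof (induction r)
  case 0 then show ?case by simp
next
  case (Suc r)
  have each: "card ((\<lambda>v. v # vs) ` (X - vec.span (W \<union> set vs))) = CARD('a) ^ vec.dim X - CARD('a) ^ (vec.dim W + r)"
    if vs: "vs \<in> seqs W X r" for vs
  proof -
    have p: "length vs = r" "set vs \<subseteq> X" "vec.dim (W \<union> set vs) = vec.dim W + r"
      using seqs_props[OF vs] by auto
    have sub: "vec.span (W \<union> set vs) \<subseteq> X"
      using assms p vec.span_minimal by blast
    have "card ((\<lambda>v. v # vs) ` (X - vec.span (W \<union> set vs))) = card (X - vec.span (W \<union> set vs))"
      by (rule card_image) (auto simp: inj_on_def)
    also have "\<dots> = card X - card (vec.span (W \<union> set vs))"
      using sub by (simp add: card_Diff_subset)
    also have "\<dots> = CARD('a) ^ vec.dim X - CARD('a) ^ (vec.dim W + r)"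
      using card_subspace[OF assms(2)] card_subspace[OF vec.subspace_span, of "W \<union> set vs"] p
      by (simp add: vec.dim_span)
    finally show ?thesis .
  qed
  have "card (seqs W X (Suc r)) = (\<Sum>vs\<in>seqs W X r. card ((\<lambda>v. v # vs) ` (X - vec.span (W \<union> set vs))))"
    unfolding seqs.simps
    by (rule card_UN_disjoint) (auto simp: seqs_finite)
  also have "\<dots> = (\<Sum>vs\<in>seqs W X r. CARD('a) ^ vec.dim X - CARD('a) ^ (vec.dim W + r))"
    using each by (rule sum.cong[OF refl])
  also have "\<dots> = card (seqs W X r) * (CARD('a) ^ vec.dim X - CARD('a) ^ (vec.dim W + r))"
    by simp
  finally show ?case using Suc.IH by simp
qed

definition Fam :: "('a::{field,finite}^'n) set \<Rightarrow> ('a^'n) set \<Rightarrow> nat \<Rightarrow> ('a^'n) set set" where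
  "Fam W X m = {U. vec.subspace U \<and> vec.dim U = m \<and> W \<subseteq> U \<and> U \<subseteq> X}"

lemma span_full_dim:
  fixes U :: "('a::{field,finite}^'n) set"
  assumes "vec.subspace U" "S \<subseteq> U" "vec.dim S = vec.dim U"
  shows "vec.span S = U"
proof -
  have "vec.span S = vec.span U" using vec.dim_eq_span[OF assms(2)] assms(3) by simp
  also have "\<dots> = U" using assms(1) vec.span_eq_iff by blast
  finally show ?thesis .
qed

lemma card_Fam:
  fixes W X :: "('a::{field,finite}^'n) set"
  assumes "vec.subspace W" "vec.subspace X" "W \<subseteq> X" "vec.dim W \<le> m"
  shows "card (Fam W X m) * (\<Prod>i<m - vec.dim W. CARD('a) ^ m - CARD('a) ^ (vec.dim W + i))
       = (\<Prod>i<m - vec.dim W. CARD('a) ^ vec.dim X - CARD('a) ^ (vec.dim W + i))"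
proof -
  define r where "r = m - vec.dim W"
  have eq: "seqs W X r = (\<Union>U\<in>Fam W X m. seqs W U r)"
  proof
    show "seqs W X r \<subseteq> (\<Union>U\<in>Fam W X m. seqs W U r)"
    proof
      fix vs assume vs: "vs \<in> seqs W X r"
      note p = seqs_props[OF vs]
      let ?U = "vec.span (W \<union> set vs)"
      have "vec.subspace ?U" by (rule vec.subspace_span)
      moreover have "vec.dim ?U = m" using p r_def assms(4) by (simp add: vec.dim_span)
      moreover have "W \<subseteq> ?U" using vec.span_superset by blast
      moreover have "?U \<subseteq> X"
        by (rule vec.span_minimal) (use p assms(2,3) in auto)
      ultimately have "?U \<in> Fam W X m" unfolding Fam_def by blast
      moreover have "vs \<in> seqs W ?U r"
        by (rule seqs_restrict[OF vs]) (meson Un_upper2 vec.span_superset order_trans)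
      ultimately show "vs \<in> (\<Union>U\<in>Fam W X m. seqs W U r)" by blast
    qed
  next
    show "(\<Union>U\<in>Fam W X m. seqs W U r) \<subseteq> seqs W X r"
    proof (rule UN_least)
      fix U assume "U \<in> Fam W X m"
      then have "U \<subseteq> X" by (simp add: Fam_def)
      then show "seqs W U r \<subseteq> seqs W X r" by (rule seqs_mono)
    qed
  qed
  have spaneq: "vec.span (W \<union> set vs) = U" if "U \<in> Fam W X m" "vs \<in> seqs W U r" for U vs
  proof -
    note p = seqs_props[OF that(2)]
    show ?thesis
      using that p r_def assms(4) by (intro span_full_dim) (auto simp: Fam_def)
  qed
  have fin: "finite (Fam W X m)" by (rule finite)
  have "card (seqs W X r) = (\<Sum>U\<in>Fam W X m. card (seqs W U r))"
    unfolding eq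
  proof (rule card_UN_disjoint[OF fin])
    show "\<forall>i\<in>Fam W X m. finite (seqs W i r)" by (simp add: seqs_finite)
    show "\<forall>i\<in>Fam W X m. \<forall>j\<in>Fam W X m. i \<noteq> j \<longrightarrow> seqs W i r \<inter> seqs W j r = {}"
      using spaneq by blast
  qed
  also have "\<dots> = (\<Sum>U\<in>Fam W X m. (\<Prod>i<r. CARD('a) ^ m - CARD('a) ^ (vec.dim W + i)))"
    by (rule sum.cong[OF refl]) (subst card_seqs, auto simp: Fam_def assms)
  finally show ?thesis using card_seqs[OF assms(1-3), of r] r_def by simp
qed

lemma card_field_ge2: "CARD('a::{field,finite}) \<ge> 2"
proof -
  have "{0::'a, 1} \<subseteq> UNIV" by simp
  hence "card {0::'a, 1} \<le> CARD('a)" by (rule card_mono[rotated]) simp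
  then show ?thesis by simp
qed

lemma real_nat_pow_diff:
  fixes Q :: nat
  assumes "Q \<ge> 1" "a \<le> y"
  shows "real (Q ^ y - Q ^ a) = real Q ^ a * (real Q ^ (y - a) - 1)"
proof -
  have "Q ^ a \<le> Q ^ y" using assms by (simp add: power_increasing)
  hence "real (Q ^ y - Q ^ a) = real Q ^ y - real Q ^ a" by (simp add: of_nat_diff)
  also have "real Q ^ y = real Q ^ a * real Q ^ (y - a)"
    using assms(2) by (metis le_add_diff_inverse power_add)
  finally show ?thesis by (simp add: algebra_simps)
qed

lemma prod_rev_pow:
  fixes q :: real
  shows "(\<Prod>i<r. q ^ (r - i) - 1) = (\<Prod>i<r. q ^ (i + 1) - 1)"
proof -
  have "(\<Prod>i<r. q ^ (i + 1) - 1) = (\<Prod>i<r. q ^ (r - Suc i + 1) - 1)"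
    using prod.nat_diff_reindex[of "\<lambda>i. q ^ (i + 1) - 1" r] by simp
  also have "\<dots> = (\<Prod>i<r. q ^ (r - i) - 1)"
    by (rule prod.cong) (auto simp: Suc_diff_Suc)
  finally show ?thesis by simp
qed

lemma real_card_Fam:
  fixes W X :: "('a::{field,finite}^'n) set"
  assumes "vec.subspace W" "vec.subspace X" "W \<subseteq> X" "vec.dim W \<le> m" "m \<le> vec.dim X"
  shows "real (card (Fam W X m)) = qbinom (real CARD('a)) (int (vec.dim X) - int (vec.dim W)) (int m - int (vec.dim W))"
proof -
  define Q where "Q = CARD('a)"
  define q where "q = real Q"
  define w where "w = vec.dim W"
  define x where "x = vec.dim X"
  define r where "r = m - w"
  have Q2: "Q \<ge> 2" unfolding Q_def by (rule card_field_ge2)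
  have q2: "q \<ge> 2" using Q2 unfolding q_def by simp
  have base: "card (Fam W X m) * (\<Prod>i<r. Q ^ m - Q ^ (w + i)) = (\<Prod>i<r. Q ^ x - Q ^ (w + i))"
    using card_Fam[OF assms(1-4)] unfolding Q_def w_def x_def r_def by simp
  hence "real (card (Fam W X m)) * (\<Prod>i<r. real (Q ^ m - Q ^ (w + i))) = (\<Prod>i<r. real (Q ^ x - Q ^ (w + i)))"
    by (metis of_nat_mult of_nat_prod)
  moreover have "(\<Prod>i<r. real (Q ^ m - Q ^ (w + i))) = (\<Prod>i<r. q ^ (w + i) * (q ^ (r - i) - 1))"
  proof (rule prod.cong[OF refl])
    fix i assume "i \<in> {..<r}"
    hence "w + i \<le> m" "m - (w + i) = r - i" using assms(4) by (auto simp: r_def w_def)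
    then show "real (Q ^ m - Q ^ (w + i)) = q ^ (w + i) * (q ^ (r - i) - 1)"
      using real_nat_pow_diff[of Q "w + i" m] Q2 unfolding q_def by simp
  qed
  moreover have "(\<Prod>i<r. real (Q ^ x - Q ^ (w + i))) = (\<Prod>i<r. q ^ (w + i) * (q ^ (x - w - i) - 1))"
  proof (rule prod.cong[OF refl])
    fix i assume "i \<in> {..<r}"
    hence "w + i \<le> x" "x - (w + i) = x - w - i" using assms(4,5) by (auto simp: r_def w_def x_def)
    then show "real (Q ^ x - Q ^ (w + i)) = q ^ (w + i) * (q ^ (x - w - i) - 1)"
      using real_nat_pow_diff[of Q "w + i" x] Q2 unfolding q_def by simp
  qed
  ultimately have "real (card (Fam W X m)) * ((\<Prod>i<r. q ^ (w + i)) * (\<Prod>i<r. q ^ (r - i) - 1))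
      = (\<Prod>i<r. q ^ (w + i)) * (\<Prod>i<r. q ^ (x - w - i) - 1)"
    by (simp add: prod.distrib)
  moreover have "(\<Prod>i<r. q ^ (w + i)) \<noteq> 0" using q2 by (simp add: prod_zero_iff)
  ultimately have e: "real (card (Fam W X m)) * (\<Prod>i<r. q ^ (i + 1) - 1) = (\<Prod>i<r. q ^ (x - w - i) - 1)"
    by (simp add: prod_rev_pow)
  have nz: "(\<Prod>i<r. q ^ (i + 1) - 1) \<noteq> 0"
  proof -
    have "q ^ (i + 1) - 1 \<noteq> 0" for i
    proof -
      have "q ^ (i+1) \<ge> q" using q2 by (metis le_add2 one_le_numeral order_trans power_one_right power_increasing)
      then show ?thesis using q2 by linarith
    qed
    then show ?thesis by (simp add: prod_zero_iff)
  qed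
  have "real (card (Fam W X m)) = (\<Prod>i<r. q ^ (x - w - i) - 1) / (\<Prod>i<r. q ^ (i + 1) - 1)"
    using e nz by (simp add: field_simps)
  also have "\<dots> = (\<Prod>i<r. (q ^ (x - w - i) - 1) / (q ^ (i + 1) - 1))"
    by (simp add: prod_dividef)
  also have "\<dots> = qbinom q (int x - int w) (int m - int w)"
    unfolding qbinom_def using assms(4,5)
    by (auto simp: r_def w_def x_def atLeast0LessThan nat_diff_distrib intro!: prod.cong)
  finally show ?thesis unfolding q_def Q_def w_def x_def .
qed

lemma prod_rev_gen:
  fixes f :: "nat \<Rightarrow> real"
  shows "(\<Prod>i<r. f (r - i)) = (\<Prod>i<r. f (i + 1))"
proof -
  have "(\<Prod>i<r. f (i + 1)) = (\<Prod>i<r. f (r - Suc i + 1))"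
    using prod.nat_diff_reindex[of "\<lambda>i. f (i + 1)" r] by simp
  also have "\<dots> = (\<Prod>i<r. f (r - i))"
    by (rule prod.cong) (auto simp: Suc_diff_Suc)
  finally show ?thesis by simp
qed

lemma nat_int_diff: "nat (int M - int i) = M - i"
  by (cases "i \<le> M") auto

lemma nat_int_diff1: "nat (int M - 1 - int i) = M - 1 - i"
  by (cases "i + 1 \<le> M") auto

lemma qbinom_nat: "qbinom q (int M) (int a) = (\<Prod>i<a. q ^ (M - i) - 1) / (\<Prod>i<a. q ^ (i + 1) - 1)"
proof -
  have "qbinom q (int M) (int a) = (\<Prod>i<a. (q ^ (M - i) - 1) / (q ^ (i + 1) - 1))"
    unfolding qbinom_def by (simp add: atLeast0LessThan nat_int_diff)
  also have "\<dots> = (\<Prod>i<a. q ^ (M - i) - 1) / (\<Prod>i<a. q ^ (i + 1) - 1)"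
    by (rule prod_dividef)
  finally show ?thesis .
qed

lemma pow_minus_one_pos: "(q::real) \<ge> 2 \<Longrightarrow> q ^ (Suc i) - 1 > 0"
proof -
  assume q: "q \<ge> 2"
  have "q ^ Suc i \<ge> q" using q by (metis Suc_eq_plus1 le_add2 one_le_numeral order_trans power_one_right power_increasing)
  then show ?thesis using q by linarith
qed

lemma qbinom_one: "qbinom q (int d) 1 = (q ^ d - 1) / (q - 1)"
  using qbinom_nat[of q d 1] by simp

lemma qbinom_hyper:
  assumes "(q::real) \<ge> 2"
  shows "qbinom q (int d + 1) (int d) = theta q d"
proof -
  have num: "(\<Prod>i<d. q ^ (d + 1 - i) - 1) = (\<Prod>i<d. q ^ (i + 2) - 1)"
    using prod_rev_gen[of "\<lambda>j. q ^ (j + 1) - 1" d] by (simp add: Suc_diff_le)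
  have "(\<Prod>i<d. q ^ (i + 2) - 1) * (q - 1) = (\<Prod>i<Suc d. q ^ (i + 1) - 1)"
    unfolding prod.lessThan_Suc_shift by simp
  also have "\<dots> = (\<Prod>i<d. q ^ (i + 1) - 1) * (q ^ (d + 1) - 1)"
    by simp
  finally have e: "(\<Prod>i<d. q ^ (i + 2) - 1) * (q - 1) = (\<Prod>i<d. q ^ (i + 1) - 1) * (q ^ (d + 1) - 1)" .
  have nz: "(\<Prod>i<d. q ^ (i + 1) - 1) \<noteq> 0"
    using pow_minus_one_pos[OF assms] by (simp add: prod_zero_iff) (metis less_irrefl)
  have q1: "q - 1 \<noteq> 0" using assms by simp
  have "qbinom q (int d + 1) (int d) = qbinom q (int (d + 1)) (int d)" by (simp only: of_nat_add of_nat_1)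
  also have "\<dots> = (\<Prod>i<d. q ^ (d + 1 - i) - 1) / (\<Prod>i<d. q ^ (i + 1) - 1)"
    by (rule qbinom_nat)
  also have "\<dots> = (q ^ (d + 1) - 1) / (q - 1)"
    using e nz q1 num by (simp add: field_simps)
  finally show ?thesis by (simp add: theta_def)
qed

lemma qbinom_step:
  "qbinom q (int M) (int a + 1) = qbinom q (int M - 1) (int a) * ((q ^ M - 1) / (q ^ (a + 1) - 1))"
proof -
  have "qbinom q (int M) (int a + 1) = qbinom q (int M) (int (Suc a))" by (simp only: of_nat_Suc add.commute)
  also have "\<dots> = (\<Prod>i<Suc a. q ^ (M - i) - 1) / (\<Prod>i<Suc a. q ^ (i + 1) - 1)"
    by (rule qbinom_nat)
  also have "(\<Prod>i<Suc a. q ^ (M - i) - 1) = (q ^ M - 1) * (\<Prod>i<a. q ^ (M - 1 - i) - 1)"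
    unfolding prod.lessThan_Suc_shift by simp
  also have "(\<Prod>i<Suc a. q ^ (i + 1) - 1) = (\<Prod>i<a. q ^ (i + 1) - 1) * (q ^ (a + 1) - 1)"
    by simp
  also have "qbinom q (int M - 1) (int a) = (\<Prod>i<a. q ^ (M - 1 - i) - 1) / (\<Prod>i<a. q ^ (i + 1) - 1)"
  proof -
    have "qbinom q (int M - 1) (int a) = (\<Prod>i<a. (q ^ (M - 1 - i) - 1) / (q ^ (i + 1) - 1))"
      unfolding qbinom_def by (simp add: atLeast0LessThan nat_int_diff1)
    also have "\<dots> = (\<Prod>i<a. q ^ (M - 1 - i) - 1) / (\<Prod>i<a. q ^ (i + 1) - 1)"
      by (rule prod_dividef)
    finally show ?thesis .
  qed
  ultimately have "qbinom q (int M) (int a + 1) = ((q ^ M - 1) * (\<Prod>i<a. q ^ (M - 1 - i) - 1)) /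
      ((\<Prod>i<a. q ^ (i + 1) - 1) * (q ^ (a + 1) - 1))"
    and "qbinom q (int M - 1) (int a) = (\<Prod>i<a. q ^ (M - 1 - i) - 1) / (\<Prod>i<a. q ^ (i + 1) - 1)"
    by simp_all
  then show ?thesis by (simp only: times_divide_times_eq mult.commute)
qed

lemma qbinom_nonneg: "(q::real) \<ge> 2 \<Longrightarrow> qbinom q n k \<ge> 0"
proof -
  assume q: "q \<ge> 2"
  have "q ^ m - 1 \<ge> 0" for m :: nat using q by (simp add: one_le_power)
  moreover have "q ^ (i + 1) - 1 > 0" for i using pow_minus_one_pos[OF q] by simp
  ultimately show ?thesis unfolding qbinom_def
    by (auto intro!: prod_nonneg divide_nonneg_pos)
qed

lemma star_compare:
  assumes q: "(q::real) \<ge> 2" and M: "M \<ge> 2 * a + 4"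
  shows "qbinom q (int M) (int a + 1) \<ge> theta q (a + 2) * qbinom q (int M - 1) (int a)"
proof -
  have d1: "q ^ (a + 1) - 1 > 0" using pow_minus_one_pos[OF q] by simp
  have "(q ^ (a + 3) - 1) * (q ^ (a + 1) - 1) = q ^ (2 * a + 4) - q ^ (a + 3) - q ^ (a + 1) + 1"
  proof -
    have "q ^ (a + 3) * q ^ (a + 1) = q ^ (2 * a + 4)"
    proof -
      have e: "(a + 3) + (a + 1) = 2 * a + 4" by simp
      show ?thesis by (simp only: power_add[symmetric] e)
    qed
    then show ?thesis by (simp add: algebra_simps)
  qed
  also have "\<dots> \<le> q ^ (2 * a + 4) - 1"
  proof -
    have "q ^ (a + 3) \<ge> 1" "q ^ (a + 1) \<ge> 1" using q one_le_power[of q "a + 3"] one_le_power[of q "a + 1"] by simp_all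
    then show ?thesis by linarith
  qed
  also have "\<dots> \<le> q ^ M - 1" using M q by (simp add: power_increasing)
  also have "\<dots> \<le> (q ^ M - 1) * (q - 1)"
  proof -
    have "q ^ M - 1 \<ge> 0" using q by (simp add: one_le_power)
    then show ?thesis using q mult_left_mono[of 1 "q - 1" "q ^ M - 1"] by simp
  qed
  finally have "(q ^ (a + 3) - 1) * (q ^ (a + 1) - 1) \<le> (q ^ M - 1) * (q - 1)" .
  hence "(q ^ (a + 3) - 1) * (q ^ (a + 1) - 1) / (q ^ (a + 1) - 1) \<le> (q ^ M - 1) * (q - 1) / (q ^ (a + 1) - 1)"
    using d1 by (intro divide_right_mono) auto
  hence "q ^ (a + 3) - 1 \<le> (q ^ M - 1) * (q - 1) / (q ^ (a + 1) - 1)" using d1 by simp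
  hence "(q ^ (a + 3) - 1) / (q - 1) \<le> (q ^ M - 1) * (q - 1) / (q ^ (a + 1) - 1) / (q - 1)"
    using q by (intro divide_right_mono) auto
  also have "\<dots> = (q ^ M - 1) / (q ^ (a + 1) - 1)" using q by simp
  finally have ineq0: "(q ^ (a + 3) - 1) / (q - 1) \<le> (q ^ M - 1) / (q ^ (a + 1) - 1)" .
  have e3: "a + 2 + 1 = a + 3" by simp
  have ineq: "theta q (a + 2) \<le> (q ^ M - 1) / (q ^ (a + 1) - 1)"
    unfolding theta_def e3 by (rule ineq0)
  have "theta q (a + 2) * qbinom q (int M - 1) (int a) \<le> (q ^ M - 1) / (q ^ (a + 1) - 1) * qbinom q (int M - 1) (int a)"
    by (rule mult_right_mono[OF ineq qbinom_nonneg[OF q]])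
  also have "\<dots> = qbinom q (int M) (int a + 1)" by (simp add: qbinom_step)
  finally show ?thesis .
qed

lemma dim_Int_span:
  fixes S T :: "('a::{field,finite}^'n) set"
  assumes "vec.subspace S" "vec.subspace T"
  shows "vec.dim (S \<inter> T) + vec.dim (vec.span (S \<union> T)) = vec.dim S + vec.dim T"
proof -
  have "vec.span (S \<union> T) = {x + y |x y. x \<in> S \<and> y \<in> T}"
  proof -
    have "vec.span S = S" "vec.span T = T" using assms vec.span_eq_iff by blast+
    then show ?thesis unfolding vec.span_Un by (simp only:)
  qed
  then show ?thesis using vec.dim_sums_Int[OF assms] by simp
qed

lemma Fam_one_bound:
  fixes W X :: "('a::{field,finite}^'n) set"
  assumes "vec.subspace W" "vec.subspace X" "W \<subseteq> X" "vec.dim X \<le> vec.dim W + e + 1"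
  shows "real (card (Fam W X (vec.dim W + 1))) \<le> theta (real CARD('a)) e"
proof -
  define q where "q = real CARD('a)"
  have q2: "q \<ge> 2" unfolding q_def using card_field_ge2 by (metis of_nat_le_iff of_nat_numeral) 
  have th0: "theta q e \<ge> 0" unfolding theta_def using q2 one_le_power[of q "e + 1"]
    by (intro divide_nonneg_pos) auto
  show ?thesis
  proof (cases "vec.dim W + 1 \<le> vec.dim X")
    case True
    have "real (card (Fam W X (vec.dim W + 1))) = qbinom q (int (vec.dim X) - int (vec.dim W)) (int (vec.dim W + 1) - int (vec.dim W))"
      unfolding q_def using True assms by (intro real_card_Fam) auto
    also have "\<dots> = qbinom q (int (vec.dim X - vec.dim W)) 1"
      using True by (simp add: of_nat_diff)
    also have "\<dots> = (q ^ (vec.dim X - vec.dim W) - 1) / (q - 1)" by (rule qbinom_one)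
    also have "\<dots> \<le> (q ^ (e + 1) - 1) / (q - 1)"
    proof -
      have pw: "q ^ (vec.dim X - vec.dim W) \<le> q ^ (e + 1)" using q2 assms(4) by (intro power_increasing) auto
      show ?thesis by (rule divide_right_mono) (use pw q2 in linarith)+
    qed
    finally show ?thesis unfolding theta_def q_def .
  next
    case False
    have "Fam W X (vec.dim W + 1) = {}"
    proof (rule ccontr)
      assume "Fam W X (vec.dim W + 1) \<noteq> {}"
      then obtain U where "U \<in> Fam W X (vec.dim W + 1)" by blast
      hence "U \<subseteq> X" "vec.dim U = vec.dim W + 1" by (auto simp: Fam_def)
      with vec.dim_subset[OF this(1)] False show False by simp
    qed
    then show ?thesis using th0 q_def by simp
  qed
qed

lemma card_star:
  fixes W :: "('a::{field,finite}^'n) set"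
  assumes "vec.subspace W" "m \<le> CARD('n)"
  shows "real (card (Fam W UNIV m)) = qbinom (real CARD('a)) (int CARD('n) - int (vec.dim W)) (int m - int (vec.dim W))"
proof (cases "vec.dim W \<le> m")
  case True
  then show ?thesis
    using real_card_Fam[OF assms(1) vec.subspace_UNIV subset_UNIV True] assms
    by (simp add: vec.dim_UNIV card_cart_basis)
next
  case False
  have "Fam W UNIV m = {}"
  proof (rule ccontr)
    assume "Fam W UNIV m \<noteq> {}"
    then obtain U where "U \<in> Fam W UNIV m" by blast
    hence "W \<subseteq> U" "vec.dim U = m" by (auto simp: Fam_def)
    with vec.dim_subset[OF this(1)] False show False by simp
  qed
  then show ?thesis using False by (simp add: qbinom_def)
qed

theorem mainTheorem10:
  fixes S :: "('a::{field,finite} ^ 'n) set set" and k t :: nat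
  defines "n \<equiv> int CARD('n) - 1" and "q \<equiv> real CARD('a)"
  assumes "n > 2 * int k - int t" and "k > t"
    and "maximal_t_intersecting k t S"
    and "psi t S = t + 1" and "card (Tset t S) \<le> 2"
  shows "real (card S) \<le> 2 * qbinom q (n - int t - 1) (int k - int t - 1)
     + (theta q (t + 1) * theta q (k - t) - theta q (t + 1) - 1) * theta q (k - t)
       * qbinom q (n - int t - 2) (int k - int t - 2)"
proof -
  note h = assms(3-7)
  define N where "N = CARD('n)"
  have q2: "q \<ge> 2" unfolding q_def using card_field_ge2 by (metis of_nat_le_iff of_nat_numeral)
  have N: "N \<ge> 2 * k - t + 2" "2 * k \<ge> t" using h(1,2) unfolding n_def N_def by linarith+
  have ti: "t_intersecting k t S" using h(3) unfolding maximal_t_intersecting_def by blast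
  have pA: "\<And>A. A \<in> S \<Longrightarrow> vec.subspace A \<and> vec.dim A = k + 1"
    using ti unfolding t_intersecting_def proj_space_def by blast
  have mAB: "\<And>A B. A \<in> S \<Longrightarrow> B \<in> S \<Longrightarrow> vec.dim (A \<inter> B) \<ge> t + 1"
    using ti unfolding t_intersecting_def meets_in_def by blast
  define P where "P = (\<lambda>d. \<exists>T::('a^'n) set. proj_space d T \<and> (\<forall>A\<in>S. meets_in t T A))"
  have psi_eq: "psi t S = (LEAST d. P d)" unfolding psi_def P_def by simp
  have "P (N - 1)"
  proof -
    have "N \<ge> 1" unfolding N_def by (simp add: Suc_leI)
    hence "proj_space (N - 1) (UNIV :: ('a^'n) set)"
      unfolding proj_space_def N_def by (simp add: vec.dim_UNIV card_cart_basis)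
    moreover have "\<forall>A\<in>S. meets_in t UNIV A"
      unfolding meets_in_def using pA h(2) by auto
    ultimately show ?thesis unfolding P_def by blast
  qed
  hence "P (psi t S)" unfolding psi_eq by (rule LeastI)
  then obtain T1 where T1: "proj_space (t + 1) T1" "\<forall>A\<in>S. meets_in t T1 A"
    unfolding P_def using h(4) by auto
  have T1s: "vec.subspace T1" "vec.dim T1 = t + 2" using T1(1) unfolding proj_space_def by auto
  have T1m: "\<And>A. A \<in> S \<Longrightarrow> vec.dim (T1 \<inter> A) \<ge> t + 1" using T1(2) unfolding meets_in_def by blast
  have T1T: "T1 \<in> Tset t S" unfolding Tset_def using T1 h(4) by simp
  have noP: "\<not> P t"
  proof
    assume "P t"
    hence "psi t S \<le> t" unfolding psi_eq by (rule Least_le)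
    then show False using h(4) by simp
  qed
  define H where "H = Fam {0} T1 (t + 1)"
  have Hex: "\<exists>B. B \<in> S \<and> \<not> \<sigma> \<subseteq> B" if "\<sigma> \<in> H" for \<sigma>
  proof (rule ccontr)
    assume "\<not> (\<exists>B. B \<in> S \<and> \<not> \<sigma> \<subseteq> B)"
    hence all: "\<And>B. B \<in> S \<Longrightarrow> \<sigma> \<subseteq> B" by blast
    have "vec.subspace \<sigma>" "vec.dim \<sigma> = t + 1" using that unfolding H_def Fam_def by auto
    hence "proj_space t \<sigma> \<and> (\<forall>A\<in>S. meets_in t \<sigma> A)"
      unfolding proj_space_def meets_in_def using all by (simp add: Int_absorb2)
    hence "P t" unfolding P_def by blast
    then show False using noP by blast
  qed
  define Bf where "Bf = (\<lambda>\<sigma>. SOME B. B \<in> S \<and> \<not> \<sigma> \<subseteq> B)"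
  have Bf: "Bf \<sigma> \<in> S" "\<not> \<sigma> \<subseteq> Bf \<sigma>" if "\<sigma> \<in> H" for \<sigma>
    using someI_ex[OF Hex[OF that]] unfolding Bf_def by auto
  define Pi where "Pi = (\<lambda>\<sigma>. vec.span (Bf \<sigma> \<union> T1))"
  define Taus where "Taus = (\<lambda>\<sigma>. Fam \<sigma> (Pi \<sigma>) (t + 2) - {T1})"
  define AllTaus where "AllTaus = (\<Union>\<sigma>\<in>H. Taus \<sigma>)"
  define Cf where "Cf = (\<lambda>\<tau>. SOME C. C \<in> S \<and> \<not> meets_in t \<tau> C)"
  define Rhos where "Rhos = (\<lambda>\<tau>. Fam \<tau> (vec.span (\<tau> \<union> Cf \<tau>)) (t + 3))"
  define G where "G = (\<lambda>\<tau>. if \<tau> \<in> Tset t S then Fam \<tau> UNIV (k + 1) else (\<Union>\<rho>\<in>Rhos \<tau>. Fam \<rho> UNIV (k + 1)))"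
  have Cf: "Cf \<tau> \<in> S" "vec.dim (\<tau> \<inter> Cf \<tau>) < t + 1"
    if "\<tau> \<notin> Tset t S" "vec.subspace \<tau>" "vec.dim \<tau> = t + 2" for \<tau>
  proof -
    have "\<exists>C. C \<in> S \<and> \<not> meets_in t \<tau> C"
      using that h(4) unfolding Tset_def proj_space_def by auto
    from someI_ex[OF this] show "Cf \<tau> \<in> S" "vec.dim (\<tau> \<inter> Cf \<tau>) < t + 1"
      unfolding Cf_def meets_in_def by auto
  qed
  have sub_self: "\<And>U::('a^'n) set. vec.subspace U \<Longrightarrow> vec.span U = U"
    using vec.span_eq_iff by blast
  have cover: "S \<subseteq> Fam T1 UNIV (k + 1) \<union> (\<Union>\<tau>\<in>AllTaus. G \<tau>)"
  proof
    fix A assume A: "A \<in> S"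
    note pAA = pA[OF A]
    show "A \<in> Fam T1 UNIV (k + 1) \<union> (\<Union>\<tau>\<in>AllTaus. G \<tau>)"
    proof (cases "T1 \<subseteq> A")
      case True
      then show ?thesis using pAA unfolding Fam_def by auto
    next
      case False
      define \<sigma> where "\<sigma> = A \<inter> T1"
      have ss: "vec.subspace \<sigma>" unfolding \<sigma>_def using pAA T1s by (simp add: vec.subspace_inter)
      have sT1: "\<sigma> \<subseteq> T1" unfolding \<sigma>_def by blast
      have d1: "vec.dim \<sigma> \<ge> t + 1" using T1m[OF A] unfolding \<sigma>_def by (simp add: Int_commute)
      have d2: "vec.dim \<sigma> \<le> t + 2" using vec.dim_subset[OF sT1] T1s by simp
      have "vec.dim \<sigma> \<noteq> t + 2"
      proof
        assume "vec.dim \<sigma> = t + 2"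
        hence "vec.span \<sigma> = T1" using span_full_dim[OF T1s(1) sT1] T1s by simp
        hence "\<sigma> = T1" using sub_self[OF ss] by simp
        then show False using False unfolding \<sigma>_def by blast
      qed
      hence dsig: "vec.dim \<sigma> = t + 1" using d1 d2 by simp
      have sH: "\<sigma> \<in> H" unfolding H_def Fam_def using ss sT1 dsig vec.subspace_0[OF ss] by auto
      define B where "B = Bf \<sigma>"
      have B: "B \<in> S" "\<not> \<sigma> \<subseteq> B" using Bf[OF sH] unfolding B_def by auto
      have "\<exists>v. v \<in> A \<inter> B \<and> v \<notin> \<sigma>"
      proof (rule ccontr)
        assume "\<not> (\<exists>v. v \<in> A \<inter> B \<and> v \<notin> \<sigma>)"
        hence ABs: "A \<inter> B \<subseteq> \<sigma>" by blast
        have "vec.dim (A \<inter> B) \<ge> t + 1" using mAB[OF A B(1)] .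
        hence "vec.span (A \<inter> B) = \<sigma>" using span_full_dim[OF ss ABs] vec.dim_subset[OF ABs] dsig by simp
        moreover have "vec.subspace (A \<inter> B)" using pAA pA[OF B(1)] by (simp add: vec.subspace_inter)
        ultimately have "A \<inter> B = \<sigma>" using sub_self by simp
        then show False using B(2) by blast
      qed
      then obtain v where v: "v \<in> A" "v \<in> B" "v \<notin> \<sigma>" by blast
      define \<tau> where "\<tau> = vec.span (insert v \<sigma>)"
      have ts: "vec.subspace \<tau>" unfolding \<tau>_def by (rule vec.subspace_span)
      have td: "vec.dim \<tau> = t + 2" unfolding \<tau>_def vec.dim_span
      proof -
        have "v \<notin> vec.span \<sigma>" by (subst sub_self[OF ss]) (rule v(3))
        then show "vec.dim (insert v \<sigma>) = t + 2" using dsig by (simp add: vec.dim_insert)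
      qed
      have st: "\<sigma> \<subseteq> \<tau>" unfolding \<tau>_def using vec.span_superset by blast
      have tA: "\<tau> \<subseteq> A" unfolding \<tau>_def
        by (rule vec.span_minimal) (use v(1) pAA \<sigma>_def in auto)
      have tPi: "\<tau> \<subseteq> Pi \<sigma>" unfolding \<tau>_def Pi_def B_def[symmetric]
        by (rule vec.span_mono) (use v(2) sT1 in auto)
      have tT1: "\<tau> \<noteq> T1" using tA False by blast
      have tAll: "\<tau> \<in> AllTaus" unfolding AllTaus_def Taus_def Fam_def
        using sH ts td st tPi tT1 by auto
      have "A \<in> G \<tau>"
      proof (cases "\<tau> \<in> Tset t S")
        case True
        then show ?thesis unfolding G_def Fam_def using tA pAA by auto
      next
        case nT: False
        define C where "C = Cf \<tau>"
        have C: "C \<in> S" "vec.dim (\<tau> \<inter> C) < t + 1" using Cf[OF nT ts td] unfolding C_def by auto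
        have "\<exists>w. w \<in> A \<inter> C \<and> w \<notin> \<tau>"
        proof (rule ccontr)
          assume "\<not> (\<exists>w. w \<in> A \<inter> C \<and> w \<notin> \<tau>)"
          hence "A \<inter> C \<subseteq> \<tau> \<inter> C" by blast
          hence "vec.dim (A \<inter> C) \<le> vec.dim (\<tau> \<inter> C)" by (rule vec.dim_subset)
          then show False using mAB[OF A C(1)] C(2) by simp
        qed
        then obtain w where w: "w \<in> A" "w \<in> C" "w \<notin> \<tau>" by blast
        define \<rho> where "\<rho> = vec.span (insert w \<tau>)"
        have rs: "vec.subspace \<rho>" unfolding \<rho>_def by (rule vec.subspace_span)
        have rd: "vec.dim \<rho> = t + 3" unfolding \<rho>_def vec.dim_span
        proof -
          have "w \<notin> vec.span \<tau>" by (subst sub_self[OF ts]) (rule w(3))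
          then show "vec.dim (insert w \<tau>) = t + 3" using td by (simp add: vec.dim_insert)
        qed
        have tr: "\<tau> \<subseteq> \<rho>" unfolding \<rho>_def using vec.span_superset by blast
        have rA: "\<rho> \<subseteq> A" unfolding \<rho>_def
          by (rule vec.span_minimal) (use w(1) tA pAA in auto)
        have rX: "\<rho> \<subseteq> vec.span (\<tau> \<union> C)" unfolding \<rho>_def
          by (rule vec.span_mono) (use w(2) in auto)
        have "\<rho> \<in> Rhos \<tau>" unfolding Rhos_def Fam_def C_def[symmetric] using rs rd tr rX by auto
        moreover have "A \<in> Fam \<rho> UNIV (k + 1)" unfolding Fam_def using rA pAA by auto
        ultimately show ?thesis unfolding G_def using nT by auto
      qed
      then show ?thesis using tAll by blast
    qed
  qed
  define th1 where "th1 = theta q (t + 1)"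
  define thk where "thk = theta q (k - t)"
  define c1 where "c1 = qbinom q (int N - int (t + 2)) (int (k + 1) - int (t + 2))"
  define c2 where "c2 = qbinom q (int N - int (t + 3)) (int (k + 1) - int (t + 3))"
  have kN: "k + 1 \<le> CARD('n)" using N h(2) unfolding N_def by linarith
  have star1: "real (card (Fam X UNIV (k + 1))) = c1" if "vec.subspace X" "vec.dim X = t + 2" for X :: "('a^'n) set"
    using card_star[OF that(1) kN] that unfolding c1_def q_def N_def by simp
  have star2: "real (card (Fam X UNIV (k + 1))) = c2" if "vec.subspace X" "vec.dim X = t + 3" for X :: "('a^'n) set"
    using card_star[OF that(1) kN] that unfolding c2_def q_def N_def by simp
  have c2nn: "c2 \<ge> 0" unfolding c2_def by (rule qbinom_nonneg[OF q2])
  have c1nn: "c1 \<ge> 0" unfolding c1_def by (rule qbinom_nonneg[OF q2])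
  have thknn: "thk \<ge> 0" unfolding thk_def theta_def using q2 one_le_power[of q "k - t + 1"]
    by (intro divide_nonneg_pos) auto
  have cH: "real (card H) = th1"
  proof -
    have "real (card H) = qbinom q (int (vec.dim T1) - int (vec.dim {0::'a^'n})) (int (t + 1) - int (vec.dim {0::'a^'n}))"
      unfolding H_def q_def
      by (rule real_card_Fam) (use T1s vec.subspace_0[OF T1s(1)] in auto)
    also have "\<dots> = qbinom q (int (t + 1) + 1) (int (t + 1))" using T1s by simp
    also have "\<dots> = th1" unfolding th1_def by (rule qbinom_hyper[OF q2])
    finally show ?thesis .
  qed
  have cTaus: "real (card (Taus \<sigma>)) \<le> thk - 1" if sH: "\<sigma> \<in> H" for \<sigma>
  proof -
    have ss: "vec.subspace \<sigma>" "vec.dim \<sigma> = t + 1" "\<sigma> \<subseteq> T1" using sH unfolding H_def Fam_def by auto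
    define B where "B = Bf \<sigma>"
    have B: "B \<in> S" using Bf[OF sH] unfolding B_def by auto
    have Bs: "vec.subspace B" "vec.dim B = k + 1" using pA[OF B] by auto
    have "vec.dim (B \<inter> T1) \<ge> t + 1" using T1m[OF B] by (simp add: Int_commute)
    moreover have "vec.dim (B \<inter> T1) + vec.dim (vec.span (B \<union> T1)) = vec.dim B + vec.dim T1"
      by (rule dim_Int_span[OF Bs(1) T1s(1)])
    ultimately have dPi: "vec.dim (Pi \<sigma>) \<le> k + 2" unfolding Pi_def B_def[symmetric] using Bs T1s by simp
    have T1Pi: "T1 \<subseteq> Pi \<sigma>" unfolding Pi_def using vec.span_superset by blast
    have "real (card (Fam \<sigma> (Pi \<sigma>) (vec.dim \<sigma> + 1))) \<le> theta (real CARD('a)) (k - t)"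
    proof (rule Fam_one_bound)
      show "vec.subspace \<sigma>" by (rule ss(1))
      show "vec.subspace (Pi \<sigma>)" unfolding Pi_def by (rule vec.subspace_span)
      show "\<sigma> \<subseteq> Pi \<sigma>" using ss(3) T1Pi by blast
      show "vec.dim (Pi \<sigma>) \<le> vec.dim \<sigma> + (k - t) + 1" using dPi ss h(2) by simp
    qed
    hence F: "real (card (Fam \<sigma> (Pi \<sigma>) (t + 2))) \<le> thk" unfolding thk_def q_def using ss by simp
    have T1F: "T1 \<in> Fam \<sigma> (Pi \<sigma>) (t + 2)" unfolding Fam_def using T1s ss T1Pi by auto
    have fin: "finite (Fam \<sigma> (Pi \<sigma>) (t + 2))" by (rule finite)
    have "card (Taus \<sigma>) = card (Fam \<sigma> (Pi \<sigma>) (t + 2)) - 1"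
      unfolding Taus_def using T1F fin by (simp add: card_Diff_singleton)
    moreover have "card (Fam \<sigma> (Pi \<sigma>) (t + 2)) \<ge> 1" using T1F fin
      by (metis One_nat_def Suc_leI card_gt_0_iff empty_iff)
    ultimately show ?thesis using F by (simp add: of_nat_diff)
  qed
  have cRhos: "real (card (Rhos \<tau>)) \<le> thk" if tA: "\<tau> \<in> AllTaus" and nT: "\<tau> \<notin> Tset t S" for \<tau>
  proof -
    obtain \<sigma> where sH: "\<sigma> \<in> H" and tT: "\<tau> \<in> Taus \<sigma>" using tA unfolding AllTaus_def by blast
    have ss: "vec.subspace \<sigma>" "vec.dim \<sigma> = t + 1" "\<sigma> \<subseteq> T1" using sH unfolding H_def Fam_def by auto
    have ts: "vec.subspace \<tau>" "vec.dim \<tau> = t + 2" "\<sigma> \<subseteq> \<tau>" using tT unfolding Taus_def Fam_def by auto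
    define C where "C = Cf \<tau>"
    have C: "C \<in> S" using Cf[OF nT ts(1,2)] unfolding C_def by auto
    have Cs: "vec.subspace C" "vec.dim C = k + 1" using pA[OF C] by auto
    have TCs: "vec.subspace (T1 \<inter> C)" using T1s Cs by (simp add: vec.subspace_inter)
    have "vec.dim (\<sigma> \<inter> (T1 \<inter> C)) + vec.dim (vec.span (\<sigma> \<union> (T1 \<inter> C))) = vec.dim \<sigma> + vec.dim (T1 \<inter> C)"
      by (rule dim_Int_span[OF ss(1) TCs])
    moreover have "vec.dim (vec.span (\<sigma> \<union> (T1 \<inter> C))) \<le> t + 2"
    proof -
      have "vec.span (\<sigma> \<union> (T1 \<inter> C)) \<subseteq> T1"
        by (rule vec.span_minimal) (use ss T1s in auto)
      hence "vec.dim (vec.span (\<sigma> \<union> (T1 \<inter> C))) \<le> vec.dim T1" by (rule vec.dim_subset)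
      then show ?thesis using T1s by simp
    qed
    moreover have "vec.dim (T1 \<inter> C) \<ge> t + 1" using T1m[OF C] .
    ultimately have "vec.dim (\<sigma> \<inter> (T1 \<inter> C)) \<ge> t" using ss by simp
    moreover have "\<sigma> \<inter> (T1 \<inter> C) \<subseteq> \<tau> \<inter> C" using ts by blast
    ultimately have dtc: "vec.dim (\<tau> \<inter> C) \<ge> t" using vec.dim_subset[of "\<sigma> \<inter> (T1 \<inter> C)" "\<tau> \<inter> C"] by linarith
    have "vec.dim (\<tau> \<inter> C) + vec.dim (vec.span (\<tau> \<union> C)) = vec.dim \<tau> + vec.dim C"
      by (rule dim_Int_span[OF ts(1) Cs(1)])
    hence dX: "vec.dim (vec.span (\<tau> \<union> C)) \<le> k + 3" using dtc ts Cs by simp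
    have "real (card (Fam \<tau> (vec.span (\<tau> \<union> C)) (vec.dim \<tau> + 1))) \<le> theta (real CARD('a)) (k - t)"
    proof (rule Fam_one_bound)
      show "vec.subspace \<tau>" by (rule ts(1))
      show "vec.subspace (vec.span (\<tau> \<union> C))" by (rule vec.subspace_span)
      show "\<tau> \<subseteq> vec.span (\<tau> \<union> C)" using vec.span_superset by blast
      show "vec.dim (vec.span (\<tau> \<union> C)) \<le> vec.dim \<tau> + (k - t) + 1" using dX ts h(2) by simp
    qed
    moreover have e: "vec.dim \<tau> + 1 = t + 3" using ts by simp
    ultimately show ?thesis unfolding Rhos_def C_def[symmetric] thk_def q_def e by simp
  qed
  have c1c2: "thk * c2 \<le> c1"
  proof (cases "k \<ge> t + 2")
    case True
    define a where "a = k - t - 2"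
    define M where "M = N - t - 2"
    have e1: "int N - int (t + 2) = int M" "int (k + 1) - int (t + 2) = int a + 1"
      using True N unfolding a_def M_def by auto
    have e2: "int N - int (t + 3) = int M - 1" "int (k + 1) - int (t + 3) = int a"
      using True N unfolding a_def M_def by auto
    have e3: "k - t = a + 2" using True unfolding a_def by simp
    have "M \<ge> 2 * a + 4" using True N unfolding a_def M_def by linarith
    from star_compare[OF q2 this] show ?thesis
      unfolding c1_def c2_def thk_def e1 e2 e3 by simp
  next
    case False
    hence "int (k + 1) - int (t + 3) < 0" by simp
    hence "c2 = 0" unfolding c2_def qbinom_def by simp
    then show ?thesis using c1nn by simp
  qed
  have Tss: "vec.subspace \<tau> \<and> vec.dim \<tau> = t + 2 \<and> \<tau> \<noteq> T1" if "\<tau> \<in> AllTaus" for \<tau>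
    using that unfolding AllTaus_def Taus_def Fam_def by auto
  have Gb: "real (card (G \<tau>)) \<le> thk * c2 + (if \<tau> \<in> Tset t S then c1 - thk * c2 else 0)"
    if tA: "\<tau> \<in> AllTaus" for \<tau>
  proof (cases "\<tau> \<in> Tset t S")
    case True
    then show ?thesis unfolding G_def using star1 Tss[OF tA] by simp
  next
    case False
    have finR: "finite (Rhos \<tau>)" by (rule finite)
    have "card (G \<tau>) \<le> (\<Sum>\<rho>\<in>Rhos \<tau>. card (Fam \<rho> UNIV (k + 1)))"
      unfolding G_def using False card_UN_le[OF finR] by simp
    hence "real (card (G \<tau>)) \<le> (\<Sum>\<rho>\<in>Rhos \<tau>. real (card (Fam \<rho> UNIV (k + 1))))"
      by (metis of_nat_le_iff of_nat_sum)
    also have "\<dots> = (\<Sum>\<rho>\<in>Rhos \<tau>. c2)"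
    proof (rule sum.cong[OF refl])
      fix \<rho> assume "\<rho> \<in> Rhos \<tau>"
      hence "vec.subspace \<rho>" "vec.dim \<rho> = t + 3" unfolding Rhos_def Fam_def by auto
      then show "real (card (Fam \<rho> UNIV (k + 1))) = c2" by (rule star2)
    qed
    also have "\<dots> = real (card (Rhos \<tau>)) * c2" by simp
    also have "\<dots> \<le> thk * c2" by (rule mult_right_mono[OF cRhos[OF tA False] c2nn])
    finally show ?thesis using False by simp
  qed
  have finAll: "finite AllTaus" by (rule finite)
  have cS: "real (card S) \<le> c1 + (\<Sum>\<tau>\<in>AllTaus. real (card (G \<tau>)))"
  proof -
    have "card S \<le> card (Fam T1 UNIV (k + 1) \<union> (\<Union>\<tau>\<in>AllTaus. G \<tau>))"
      by (rule card_mono[OF finite cover])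
    also have "\<dots> \<le> card (Fam T1 UNIV (k + 1)) + card (\<Union>\<tau>\<in>AllTaus. G \<tau>)" by (rule card_Un_le)
    also have "\<dots> \<le> card (Fam T1 UNIV (k + 1)) + (\<Sum>\<tau>\<in>AllTaus. card (G \<tau>))"
      using card_UN_le[OF finAll] by simp
    finally have "real (card S) \<le> real (card (Fam T1 UNIV (k + 1))) + (\<Sum>\<tau>\<in>AllTaus. real (card (G \<tau>)))"
      by (metis of_nat_add of_nat_le_iff of_nat_sum)
    then show ?thesis using star1[OF T1s] by simp
  qed
  have sumb: "(\<Sum>\<tau>\<in>AllTaus. real (card (G \<tau>))) \<le> real (card AllTaus) * (thk * c2) + real (card (AllTaus \<inter> Tset t S)) * (c1 - thk * c2)"
  proof -
    have "(\<Sum>\<tau>\<in>AllTaus. real (card (G \<tau>))) \<le> (\<Sum>\<tau>\<in>AllTaus. thk * c2 + (if \<tau> \<in> Tset t S then c1 - thk * c2 else 0))"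
      by (rule sum_mono) (rule Gb)
    also have "\<dots> = real (card AllTaus) * (thk * c2) + (\<Sum>\<tau>\<in>AllTaus. (if \<tau> \<in> Tset t S then c1 - thk * c2 else 0))"
      by (simp add: sum.distrib)
    also have "(\<Sum>\<tau>\<in>AllTaus. (if \<tau> \<in> Tset t S then c1 - thk * c2 else 0)) = (\<Sum>\<tau>\<in>AllTaus \<inter> Tset t S. c1 - thk * c2)"
      by (rule sum.inter_restrict[OF finAll, symmetric])
    also have "\<dots> = real (card (AllTaus \<inter> Tset t S)) * (c1 - thk * c2)" by simp
    finally show ?thesis .
  qed
  have cAll: "real (card AllTaus) \<le> th1 * (thk - 1)"
  proof -
    have finH: "finite H" by (rule finite)
    have "card AllTaus \<le> (\<Sum>\<sigma>\<in>H. card (Taus \<sigma>))" unfolding AllTaus_def by (rule card_UN_le[OF finH])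
    hence "real (card AllTaus) \<le> (\<Sum>\<sigma>\<in>H. real (card (Taus \<sigma>)))" by (metis of_nat_le_iff of_nat_sum)
    also have "\<dots> \<le> (\<Sum>\<sigma>\<in>H. thk - 1)" by (rule sum_mono) (rule cTaus)
    also have "\<dots> = th1 * (thk - 1)" using cH by simp
    finally show ?thesis .
  qed
  have cInt: "real (card (AllTaus \<inter> Tset t S)) \<le> 1"
  proof -
    have "AllTaus \<inter> Tset t S \<subseteq> Tset t S - {T1}" using Tss by blast
    hence "card (AllTaus \<inter> Tset t S) \<le> card (Tset t S - {T1})" by (rule card_mono[OF finite])
    also have "\<dots> = card (Tset t S) - 1" using T1T by (simp add: card_Diff_singleton)
    finally show ?thesis using h(5) by simp
  qed
  have X0: "thk * c2 \<ge> 0" using thknn c2nn by simp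
  have D0: "c1 - thk * c2 \<ge> 0" using c1c2 by simp
  have "real (card S) \<le> c1 + real (card AllTaus) * (thk * c2) + real (card (AllTaus \<inter> Tset t S)) * (c1 - thk * c2)"
    using cS sumb by simp
  also have "\<dots> \<le> c1 + th1 * (thk - 1) * (thk * c2) + 1 * (c1 - thk * c2)"
    using mult_right_mono[OF cAll X0] mult_right_mono[OF cInt D0] by simp
  also have "\<dots> = 2 * c1 + (th1 * thk - th1 - 1) * thk * c2" by (simp add: algebra_simps)
  also have "c1 = qbinom q (n - int t - 1) (int k - int t - 1)"
    unfolding c1_def n_def N_def by (simp add: algebra_simps)
  also have "c2 = qbinom q (n - int t - 2) (int k - int t - 2)"
    unfolding c2_def n_def N_def by (simp add: algebra_simps)
  finally show ?thesis unfolding th1_def thk_def .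
qed

end
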